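(* For all integers $1\leq k\leq n$, $$\mathrm{ex}(K_{n,n,n,n},kK_3)\geq 4n^2+(k-1)n.$$
   Context: For graphs $G,H$, $\mathrm{ex}(G,H)$ is the maximum number of edges of a subgraph of $G$ containing no copy of $H$. $K_{n,n,n,n}$ is the complete $4$-partite graph with all parts of size $n$, and $kK_3$ denotes $k$ vertex-disjoint triangles. *)

theory Defs
  imports Main
begin

text \<open>A (simple) graph is represented by its edge set: a set of 2-element vertex sets.
  A copy of H in G is an injective map on the vertices of H sending edges of H to edges of G.\<close>

definition has_copy :: "'a set set \<Rightarrow> 'b set set \<Rightarrow> bool" where
  "has_copy G H \<longleftrightarrow> (\<exists>f. inj_on f (\<Union>H) \<and> (\<forall>e\<in>H. f ` e \<in> G))"

definition ex :: "'a set set \<Rightarrow> 'b set set \<Rightarrow> nat" where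
  "ex G H = Max {card F | F. F \<subseteq> G \<and> \<not> has_copy F H}"

definition K4part :: "nat \<Rightarrow> (nat \<times> nat) set set" where
  "K4part n = {{(i,a),(j,b)} | i j a b. i < 4 \<and> j < 4 \<and> a < n \<and> b < n \<and> i \<noteq> j}"

definition kK3 :: "nat \<Rightarrow> (nat \<times> nat) set set" where
  "kK3 k = {{(t,a),(t,b)} | t a b. t < k \<and> a < 3 \<and> b < 3 \<and> a \<noteq> b}"

end

theory Submission
  imports Defs
begin

definition SS :: "nat \<Rightarrow> nat \<Rightarrow> ((nat\<times>nat)\<times>(nat\<times>nat)) set" where
  "SS n k = (({0,1}\<times>{..<n})\<times>({2,3}\<times>{..<n})) \<union> (({0}\<times>{..<k-1})\<times>({1}\<times>{..<n}))"

definition FF :: "nat \<Rightarrow> nat \<Rightarrow> (nat\<times>nat) set set" where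
  "FF n k = (\<lambda>(u,v). {u,v}) ` SS n k"

lemma SS_lt: "(u,v) \<in> SS n k \<Longrightarrow> fst u < fst v"
  unfolding SS_def by auto

lemma card_SS: "card (SS n k) = 4*n^2 + (k-1)*n"
proof -
  have d: "(({0,1}\<times>{..<n})\<times>({2,3}\<times>{..<n})) \<inter> (({0::nat}\<times>{..<k-1})\<times>({1::nat}\<times>{..<n})) = {}"
    by auto
  have "card (SS n k) = card (({0::nat,1}\<times>{..<n})\<times>({2::nat,3}\<times>{..<n})) + card (({0::nat}\<times>{..<k-1})\<times>({1::nat}\<times>{..<n}))"
    unfolding SS_def by (rule card_Un_disjoint) (use d in auto)
  also have "\<dots> = 4*n^2 + (k-1)*n"
    by (simp add: card_cartesian_product power2_eq_square algebra_simps)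
  finally show ?thesis .
qed

lemma card_FF: "card (FF n k) = 4*n^2 + (k-1)*n"
proof -
  have "inj_on (\<lambda>(u,v). {u,v}) (SS n k)"
  proof (rule inj_onI)
    fix p q assume 1: "p \<in> SS n k" and 2: "q \<in> SS n k"
      and eq: "(\<lambda>(u,v). {u,v}) p = (\<lambda>(u,v). {u,v}) q"
    obtain u v where p: "p = (u,v)" by (cases p)
    obtain u' v' where q: "q = (u',v')" by (cases q)
    from SS_lt[of u v] SS_lt[of u' v'] 1 2 p q have "fst u < fst v" "fst u' < fst v'" by auto
    with eq p q show "p = q" by (auto simp: doubleton_eq_iff)
  qed
  then show ?thesis unfolding FF_def using card_SS by (simp add: card_image)
qed

lemma K4I: "i < 4 \<Longrightarrow> j < 4 \<Longrightarrow> a < n \<Longrightarrow> b < n \<Longrightarrow> i \<noteq> j \<Longrightarrow> {(i,a),(j,b)} \<in> K4part n"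
  unfolding K4part_def by blast

lemma FF_sub: "k \<le> n \<Longrightarrow> FF n k \<subseteq> K4part n"
  unfolding FF_def SS_def by (auto intro!: K4I)

lemma FF_edge: "{x,y} \<in> FF n k \<Longrightarrow> (fst x < 2) = (fst y < 2) \<Longrightarrow>
   x \<in> {0}\<times>{..<k-1} \<or> y \<in> {0}\<times>{..<k-1}"
proof -
  assume e: "{x,y} \<in> FF n k" and s: "(fst x < 2) = (fst y < 2)"
  obtain u v where uv: "{x,y} = {u,v}" "(u,v) \<in> SS n k"
    using e unfolding FF_def by auto
  have "(fst u < 2) = (fst v < 2)"
    using uv(1) s by (simp add: doubleton_eq_iff) (metis)
  then have "u \<in> {0}\<times>{..<k-1}" using uv(2) unfolding SS_def by auto
  then show ?thesis using uv(1) by (auto simp: doubleton_eq_iff)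
qed

lemma tri: "{x,y} \<in> FF n k \<Longrightarrow> {x,z} \<in> FF n k \<Longrightarrow> {y,z} \<in> FF n k \<Longrightarrow>
   {x,y,z} \<inter> ({0}\<times>{..<k-1}) \<noteq> {}"
proof -
  assume a: "{x,y} \<in> FF n k" "{x,z} \<in> FF n k" "{y,z} \<in> FF n k"
  consider "(fst x < 2) = (fst y < 2)" | "(fst x < 2) = (fst z < 2)" | "(fst y < 2) = (fst z < 2)"
    by blast
  then show ?thesis using FF_edge[OF a(1)] FF_edge[OF a(2)] FF_edge[OF a(3)] by cases blast+
qed

lemma no_copy: "1 \<le> k \<Longrightarrow> \<not> has_copy (FF n k) (kK3 k)"
proof
  assume k1: "1 \<le> k" and "has_copy (FF n k) (kK3 k)"
  then obtain f where inj: "inj_on f (\<Union>(kK3 k))" and hom: "\<forall>e\<in>kK3 k. f ` e \<in> FF n k"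
    unfolding has_copy_def by blast
  define X where "X = ({0::nat}\<times>{..<k-1::nat})"
  have E: "{(t,a),(t,b)} \<in> kK3 k" if "t<k" "a<3" "b<3" "a\<noteq>b" for t a b
    unfolding kK3_def using that by blast
  have P: "(t,a) \<in> \<Union>(kK3 k)" if "t<k" "a<3" for t a
  proof -
    have "{(t,a),(t,if a = 0 then 1 else 0)} \<in> kK3 k" using E[of t a "if a = 0 then 1 else 0"] that by (auto split: if_splits)
    then show ?thesis by blast
  qed
  define g where "g t = (SOME x. x \<in> {f (t,0), f (t,1), f (t,2)} \<inter> X)" for t
  have g: "g t \<in> {f (t,0), f (t,1), f (t,2)} \<inter> X" if "t<k" for t
  proof -
    have "{f (t,0), f (t,1)} \<in> FF n k" using hom E[of t 0 1] that by force
    moreover have "{f (t,0), f (t,2)} \<in> FF n k" using hom E[of t 0 2] that by force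
    moreover have "{f (t,1), f (t,2)} \<in> FF n k" using hom E[of t 1 2] that by force
    ultimately have "{f (t,0), f (t,1), f (t,2)} \<inter> X \<noteq> {}" unfolding X_def by (rule tri)
    then show ?thesis unfolding g_def by (metis (no_types, lifting) ex_in_conv someI)
  qed
  have "inj_on g {..<k}"
  proof (rule inj_onI)
    fix s t assume s: "s \<in> {..<k}" and t: "t \<in> {..<k}" and eq: "g s = g t"
    obtain a where a: "a<3" "g s = f (s,a)" using g[of s] s by (metis IntD1 insertE empty_iff lessThan_iff zero_less_numeral one_less_numeral_iff semiring_norm(77) numeral_less_iff less_numeral_extra(1) lessI numeral_3_eq_3 One_nat_def Suc_1 less_Suc_eq)
    obtain b where b: "b<3" "g t = f (t,b)" using g[of t] t by (metis IntD1 insertE empty_iff lessThan_iff zero_less_numeral one_less_numeral_iff semiring_norm(77) numeral_less_iff less_numeral_extra(1) lessI numeral_3_eq_3 One_nat_def Suc_1 less_Suc_eq)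
    have "f (s,a) = f (t,b)" using a b eq by simp
    then have "(s,a) = (t,b)" using inj P[of s a] P[of t b] s t a b by (auto dest: inj_onD)
    then show "s = t" by simp
  qed
  moreover have "g ` {..<k} \<subseteq> X" using g by auto
  ultimately have "card {..<k} \<le> card X" by (intro card_inj_on_le) (auto simp: X_def)
  moreover have "card X = k - 1" unfolding X_def by (simp add: card_cartesian_product)
  ultimately show False using k1 by simp
qed

theorem mainTheorem5:
  fixes n k :: nat
  assumes "1 \<le> k" and "k \<le> n"
  shows "ex (K4part n) (kK3 k) \<ge> 4 * n^2 + (k - 1) * n"
proof -
  have fin: "finite (K4part n)"
  proof -
    have "K4part n \<subseteq> (\<lambda>(u,v). {u,v}) ` (({..<4}\<times>{..<n}) \<times> ({..<4}\<times>{..<n}))"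
      unfolding K4part_def by auto
    then show ?thesis by (rule finite_subset) auto
  qed
  have "finite {card F | F. F \<subseteq> K4part n \<and> \<not> has_copy F (kK3 k)}"
  proof -
    have "{card F | F. F \<subseteq> K4part n \<and> \<not> has_copy F (kK3 k)} \<subseteq> card ` Pow (K4part n)" by auto
    then show ?thesis by (rule finite_subset) (use fin in auto)
  qed
  moreover have "card (FF n k) \<in> {card F | F. F \<subseteq> K4part n \<and> \<not> has_copy F (kK3 k)}"
    using FF_sub[OF assms(2)] no_copy[OF assms(1)] by blast
  ultimately have "card (FF n k) \<le> ex (K4part n) (kK3 k)" unfolding ex_def by (rule Max_ge)
  then show ?thesis using card_FF by simp
qed

end
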